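(* Let $n\ge 2$, let $\mathcal{L}\subset\mathbb{R}^n$ be a tame lattice with Lagrangian basis $\{\mathbf{e}_1,\dots,\mathbf{e}_n\}$, $\mathbf{v}_1=\sum_i\mathbf{e}_i$, $a:=\langle\mathbf{e}_1,\mathbf{e}_1\rangle$, $h:=-\langle\mathbf{e}_1,\mathbf{e}_2\rangle$. Let $r,s$ be integers with $0\ne|r|<n$, $m=r+sn$, and suppose $$\frac{na-1}{n^2-1}\le\left(\frac{m}{r}\right)^2\le\frac{(na-1)(n+1)}{n-1}.$$ Then $$\frac{1}{2^n}\le\delta(\mathcal{L}_{\mathbf{v}_1}^{(r,s)})\le\frac{1}{2^{n/2}\sqrt{n+1}},$$ i.e. $\delta(\mathbb{Z}^n)\le\delta(\mathcal{L}_{\mathbf{v}_1}^{(r,s)})\le\delta(A_n)$. The lower bound is attained when $(m/r)^2=\frac{na-1}{n-1}$ and the upper bound is attained when $(m/r)^2=\frac{(na-1)(n+1)}{n-1}$.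
   Context: Tame lattice: a full-rank lattice $\mathcal{L}\subset\mathbb{R}^n$ with a basis $\{\mathbf{e}_1,\dots,\mathbf{e}_n\}$ (Lagrangian basis) and nonzero $\mathbf{v}_1\in\mathcal{L}\cap\mathcal{L}^*$ such that $\sum_i\mathbf{e}_i=\mathbf{v}_1$, $\langle\mathbf{e}_i,\mathbf{v}_1\rangle=1$, $\langle\mathbf{e}_i,\mathbf{e}_i\rangle=a$, $\langle\mathbf{e}_i,\mathbf{e}_j\rangle=-h$ ($i\ne j$); then $a-h(n-1)=1$. $\mathcal{L}^{(r,s)}_{\mathbf{v}_1}$ is the image of $\mathcal{L}$ under $\mathbf{x}\mapsto r\mathbf{x}+s\langle\mathbf{x},\mathbf{v}_1\rangle\mathbf{v}_1$. Center density: $\delta(\Lambda)=\lambda_1(\Lambda)^n/(2^n\operatorname{vol}(\Lambda))$. $A_n=\{\mathbf{x}\in\mathbb{Z}^{n+1}:\sum_i x_i=0\}$, a rank-$n$ lattice with $\delta(A_n)=2^{-n/2}(n+1)^{-1/2}$; $\delta(\mathbb{Z}^n)=2^{-n}$. *)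

theory Defs
  imports "HOL-Analysis.Analysis"
begin

definition lattice_gen :: "('n::finite \<Rightarrow> real^'n) \<Rightarrow> (real^'n) set" where
  "lattice_gen B = {\<Sum>i\<in>UNIV. of_int (k i) *\<^sub>R B i | k. True}"

definition is_lattice_basis :: "('n::finite \<Rightarrow> real^'n) \<Rightarrow> bool" where
  "is_lattice_basis B \<longleftrightarrow> inj B \<and> independent (range B)"

definition is_full_lattice :: "(real^'n::finite) set \<Rightarrow> bool" where
  "is_full_lattice L \<longleftrightarrow> (\<exists>B. is_lattice_basis B \<and> lattice_gen B = L)"

definition dual_lattice :: "(real^'n::finite) set \<Rightarrow> (real^'n) set" where
  "dual_lattice L = {y. \<forall>x\<in>L. x \<bullet> y \<in> \<int>}"

definition covol :: "(real^'n::finite) set \<Rightarrow> real" where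
  "covol L = \<bar>det (\<chi> i. (SOME B. is_lattice_basis B \<and> lattice_gen B = L) i)\<bar>"

definition lambda1 :: "(real^'n::finite) set \<Rightarrow> real" where
  "lambda1 L = Inf {norm x | x. x \<in> L \<and> x \<noteq> 0}"

definition center_density :: "(real^'n::finite) set \<Rightarrow> real" where
  "center_density L = lambda1 L ^ CARD('n) / (2 ^ CARD('n) * covol L)"

definition tame_basis :: "('n::finite \<Rightarrow> real^'n) \<Rightarrow> real \<Rightarrow> real \<Rightarrow> bool" where
  "tame_basis e a h \<longleftrightarrow>
     is_lattice_basis e \<and>
     (let v1 = (\<Sum>i\<in>UNIV. e i) in
        v1 \<noteq> 0 \<and> v1 \<in> lattice_gen e \<and> v1 \<in> dual_lattice (lattice_gen e) \<and>
        (\<forall>i. e i \<bullet> v1 = 1) \<and>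
        (\<forall>i. e i \<bullet> e i = a) \<and> (\<forall>i j. i \<noteq> j \<longrightarrow> e i \<bullet> e j = - h))"

definition twist_lattice :: "real \<Rightarrow> real \<Rightarrow> (real^'n::finite) \<Rightarrow> (real^'n) set \<Rightarrow> (real^'n) set" where
  "twist_lattice r s v L = (\<lambda>x. r *\<^sub>R x + (s * (x \<bullet> v)) *\<^sub>R v) ` L"

end

theory Submission
  imports Defs
begin


lemma binom3:
  fixes x :: real assumes "x \<ge> 0"
  shows "1 + real n * x + real n * (real n - 1) / 2 * x^2 \<le> (1 + x) ^ n"
proof (induction n)
  case 0 then show ?case by simp
next
  case (Suc n)
  have nn: "0 \<le> real n * (real n - 1)" by (cases n) auto
  have d: "(1 + real n * x + real n * (real n - 1) / 2 * x^2) * (1 + x)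
      - (1 + real (Suc n) * x + real (Suc n) * (real (Suc n) - 1) / 2 * x^2)
      = real n * (real n - 1) / 2 * x^3"
    by (simp add: algebra_simps power2_eq_square power3_eq_cube add_divide_distrib diff_divide_distrib)
  have "0 \<le> real n * (real n - 1) / 2 * x^3" using nn assms by simp
  then have "1 + real (Suc n) * x + real (Suc n) * (real (Suc n) - 1) / 2 * x^2
      \<le> (1 + real n * x + real n * (real n - 1) / 2 * x^2) * (1 + x)"
    using d by linarith
  also have "\<dots> \<le> (1+x)^n * (1+x)"
    using Suc assms by (intro mult_right_mono) auto
  finally show ?case by (simp add: mult.commute)
qed

lemma pow2_ge: "real n + 1 \<le> 2 ^ n"
proof (induction n)
  case 0 then show ?case by simp
next
  case (Suc n)
  have "(1::real) \<le> 2^n" by simp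
  with Suc show ?case by simp
qed

lemma sq_le_pow2: "n \<ge> 2 \<Longrightarrow> 4 * (real n + 1)^2 \<le> 9 * 2 ^ n"
proof (induction n rule: nat_induct_at_least)
  case base then show ?case by (simp add: power2_eq_square)
next
  case (Suc n)
  have nn: "(2::real) * 2 \<le> real n * real n" using mult_mono[of 2 "real n" 2 "real n"] Suc(1) by simp
  have "4 * (real (Suc n) + 1)^2 \<le> 2 * (4 * (real n + 1)^2)"
    using nn by (simp add: power2_eq_square algebra_simps)
  also have "\<dots> \<le> 2 * (9 * 2^n)" using Suc by simp
  finally show ?case by simp
qed

lemma endpoint_ineq:
  fixes N :: nat assumes "N \<ge> 2"
  shows "(real N + 1) * (real N / (real N + 1)) ^ N \<le> 2 ^ N / (real N + 1)"
proof -
  have N0: "real N > 0" using assms by simp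
  have "1 + real N * (1 / real N) + real N * (real N - 1) / 2 * (1 / real N)^2 \<le> (1 + 1/real N)^N"
    by (rule binom3) simp
  moreover have "1 + real N * (1 / real N) + real N * (real N - 1) / 2 * (1 / real N)^2 = 2 + (real N - 1)/(2*real N)"
    using N0 by (simp add: field_simps power2_eq_square)
  moreover have "(real N - 1)/(2*real N) \<ge> 1/4" using N0 assms by (simp add: field_simps)
  ultimately have A: "9/4 \<le> (1 + 1/real N)^N" by linarith
  have B: "(real N + 1)^2 \<le> 9/4 * 2^N" using sq_le_pow2[OF assms] by simp
  have C: "(1 + 1/real N)^N = (real N + 1)^N / real N ^ N"
    using N0 by (simp add: field_simps power_divide)
  have "9/4 * 2^N \<le> 2^N * (1 + 1/real N)^N" using A by (simp add: mult.commute)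
  then have X: "(real N + 1)^2 \<le> 2^N * (1 + 1/real N)^N"
    using B by linarith
  have "(real N + 1)^2 \<le> 2^N * ((real N + 1)^N / real N ^ N)"
    using X unfolding C .
  then have D: "(real N + 1)^2 * real N ^ N \<le> 2^N * (real N + 1)^N"
    using N0 by (simp add: field_simps)
  show ?thesis using D N0
    by (simp add: field_simps power_divide power2_eq_square)
qed

lemma convex_pow: "convex_on {0::real..} (\<lambda>x. x^n)"
proof (cases "even n")
  case True
  then show ?thesis using convex_power_even convex_on_subset by (metis convex_real_interval(1) subset_UNIV)
next
  case False then show ?thesis using convex_power_odd by blast
qed

lemma upper_ineq:
  fixes N :: nat and u :: real
  assumes N2: "N \<ge> 2" and lo: "1 / (real N + 1) \<le> u" and hi: "u \<le> real N + 1"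
  shows "((real N - 1 + u) / real N) ^ N * (real N + 1) \<le> 2 ^ N * u"
proof -
  define p where "p = 1 / (real N + 1)"
  define Q where "Q = real N + 1"
  have N0: "real N > 0" using N2 by simp
  have "p \<le> 1" unfolding p_def by simp
  then have pQ: "p < Q" unfolding Q_def using N0 by linarith
  define t where "t = (u - p) / (Q - p)"
  have up: "p \<le> u" unfolding p_def using lo .
  have uQ: "u \<le> Q" unfolding Q_def using hi .
  have t0: "0 \<le> t" "t \<le> 1" unfolding t_def using up uQ pQ by (auto intro: divide_nonneg_nonneg simp: divide_le_eq_1)
  define x where "x = (\<lambda>w. (real N - 1 + w) / real N)"
  have "real N - 1 + p = real N * real N / (real N + 1)" unfolding p_def using N0
    by (simp add: field_simps)
  then have xp: "x p = real N / (real N + 1)" unfolding x_def using N0 by simp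
  have xQ: "x Q = 2" unfolding x_def Q_def using N0 by (simp add: field_simps)
  have tq: "t * (Q - p) = u - p" unfolding t_def using pQ by simp
  have ueq: "u = (1 - t) * p + t * Q" using tq by (simp add: algebra_simps)
  have "(1 - t) * x p + t * x Q = ((1 - t) * (real N - 1 + p) + t * (real N - 1 + Q)) / real N"
    unfolding x_def using N0 by (simp add: field_simps)
  also have "(1 - t) * (real N - 1 + p) + t * (real N - 1 + Q) = real N - 1 + u"
    using ueq by (simp add: algebra_simps)
  finally have xu: "x u = (1 - t) * x p + t * x Q" unfolding x_def by simp
  have "x p \<ge> 0" "x Q \<ge> 0" using xp xQ N0 by auto
  then have cv: "x u ^ N \<le> (1 - t) * x p ^ N + t * x Q ^ N"
    using convex_onD[OF convex_pow, of t "x p" "x Q" N] t0 xu by simp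
  have E: "(real N + 1) * x p ^ N \<le> 2^N * p" using endpoint_ineq[OF N2] xp p_def by simp
  have F: "(real N + 1) * x Q ^ N = 2^N * Q" using xQ Q_def by simp
  have "x u ^ N * (real N + 1) \<le> ((1 - t) * x p ^ N + t * x Q ^ N) * (real N + 1)"
    using cv N0 by (intro mult_right_mono) auto
  also have "\<dots> = (1 - t) * ((real N + 1) * x p ^ N) + t * ((real N + 1) * x Q ^ N)"
    by (simp add: algebra_simps)
  also have "\<dots> \<le> (1 - t) * (2^N * p) + t * (2^N * Q)"
    using E F t0 by (intro add_mono mult_left_mono) auto
  also have "\<dots> = 2^N * u" unfolding ueq by (simp add: algebra_simps)
  finally show ?thesis unfolding x_def .
qed

lemma lower_pow1:
  fixes N :: nat and u :: real assumes "N \<ge> 1" "u > 0"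
  shows "u \<le> ((real N - 1 + u) / real N) ^ N"
proof -
  have N0: "real N > 0" using assms by simp
  have "-1 \<le> (u - 1) / real N" using N0 assms by (simp add: field_simps)
  from Bernoulli_inequality[OF this, of N]
  have "1 + real N * ((u - 1) / real N) \<le> (1 + (u - 1) / real N) ^ N" .
  moreover have "1 + real N * ((u - 1) / real N) = u" using N0 by simp
  moreover have "1 + (u - 1) / real N = (real N - 1 + u) / real N" using N0 by (simp add: field_simps)
  ultimately show ?thesis by simp
qed

lemma lower_pow2:
  fixes N :: nat and u :: real assumes N2: "N \<ge> 2" and lo: "1 / (real N + 1) \<le> u"
  shows "u \<le> (real N * u) ^ N"
proof -
  have N0: "real N > 0" using N2 by simp
  have "0 < 1 / (real N + 1)" by simp
  then have u0: "u > 0" using lo by linarith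
  show ?thesis
  proof (cases "real N * u \<ge> 1")
    case True
    have "u \<le> real N * u" using u0 N2 by simp
    also have "\<dots> \<le> (real N * u) ^ N" using True N2 by (simp add: self_le_power)
    finally show ?thesis .
  next
    case False
    have "-1 \<le> -1 / (real N + 1)" using N0 by (simp add: field_simps)
    from Bernoulli_inequality[OF this, of "N - 1"]
    have b: "1 + real (N - 1) * (-1 / (real N + 1)) \<le> (1 + -1 / (real N + 1)) ^ (N - 1)" .
    have b1: "1 + real (N - 1) * (-1 / (real N + 1)) = 2 / (real N + 1)"
      using N2 by (simp add: of_nat_diff field_simps)
    have b2: "1 + -1 / (real N + 1) = real N / (real N + 1)" using N0 by (simp add: field_simps)
    have "real N * (1 / (real N + 1)) \<le> real N * u" using lo N0 by (intro mult_left_mono) auto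
    then have Nu: "real N / (real N + 1) \<le> real N * u" by simp
    have "2 / (real N + 1) \<le> (real N / (real N + 1)) ^ (N - 1)" using b b1 b2 by simp
    also have "\<dots> \<le> (real N * u) ^ (N - 1)" using Nu N0 by (intro power_mono) auto
    finally have c: "2 / (real N + 1) \<le> (real N * u) ^ (N - 1)" .
    have "u \<le> 2 / (real N + 1) * (real N * u)" using u0 N2 by (simp add: field_simps)
    also have "\<dots> \<le> (real N * u) ^ (N - 1) * (real N * u)" using c u0 N0 by (intro mult_right_mono) auto
    also have "\<dots> = (real N * u) ^ N"
    proof -
      obtain k where "N = Suc k" using N2 by (cases N) auto
      then show ?thesis by (simp add: mult.commute)
    qed
    finally show ?thesis .
  qed
qed




lemma det_row_diag:
  fixes A :: "real^'n::finite^'n"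
  assumes z: "\<And>i j. i \<noteq> i0 \<Longrightarrow> j \<noteq> i \<Longrightarrow> A$i$j = 0"
  shows "det A = (\<Prod>i\<in>UNIV. A$i$i)"
proof -
  have "det A = (\<Sum>p\<in>{p. p permutes (UNIV::'n set)}. if p = id then (\<Prod>i\<in>UNIV. A$i$i) else 0)"
    unfolding det_def
  proof (rule sum.cong[OF refl])
    fix p assume p: "p \<in> {p. p permutes (UNIV::'n set)}"
    show "of_int (sign p) * (\<Prod>i\<in>UNIV. A$i$p i) = (if p = id then (\<Prod>i\<in>UNIV. A$i$i) else 0)"
    proof (cases "p = id")
      case True then show ?thesis by (simp add: sign_id)
    next
      case False
      then obtain i where i: "p i \<noteq> i" by (metis eq_id_iff)
      have "\<exists>j. j \<noteq> i0 \<and> p j \<noteq> j"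
      proof (cases "i = i0")
        case True
        have inj: "inj p" using p permutes_inj by auto
        have "p (p i) \<noteq> p i" using i inj by (metis injD)
        then show ?thesis using i True by metis
      next
        case False then show ?thesis using i by blast
      qed
      then obtain j where j: "j \<noteq> i0" "p j \<noteq> j" by blast
      have "A$j$p j = 0" using z j by blast
      then have "(\<Prod>i\<in>UNIV. A$i$p i) = 0" by (intro prod_zero) auto
      then show ?thesis using False by simp
    qed
  qed
  also have "\<dots> = (\<Prod>i\<in>UNIV. A$i$i)" using permutes_id[of "UNIV::'n set"] by (simp add: sum.delta)
  finally show ?thesis .
qed

lemma det_col_diag:
  fixes A :: "real^'n::finite^'n"
  assumes z: "\<And>i j. j \<noteq> i0 \<Longrightarrow> j \<noteq> i \<Longrightarrow> A$i$j = 0"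
  shows "det A = (\<Prod>i\<in>UNIV. A$i$i)"
proof -
  have "det (transpose A) = (\<Prod>i\<in>UNIV. transpose A$i$i)"
    by (rule det_row_diag[of i0]) (simp add: transpose_def z)
  moreover have "(\<Prod>i\<in>UNIV. transpose A$i$i) = (\<Prod>i\<in>UNIV. A$i$i)" by (simp add: transpose_def)
  ultimately show ?thesis by (metis det_transpose)
qed

lemma det_gram:
  fixes \<alpha> \<beta> :: real
  shows "det (\<chi> i j. (if i = j then \<alpha> else 0) + \<beta> :: real^'n::finite^'n)
      = \<alpha> ^ (CARD('n) - 1) * (\<alpha> + real CARD('n) * \<beta>)"
proof -
  obtain i0 :: 'n where True by blast
  define M :: "real^'n^'n" where "M = (\<chi> i j. (if i = j then \<alpha> else 0) + \<beta>)"
  define A :: "real^'n^'n" where "A = (\<chi> i j. (if j = i then 1 else 0) - (if i \<noteq> i0 \<and> j = i0 then 1 else 0))"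
  define C :: "real^'n^'n" where "C = (\<chi> j k. if k = i0 then 1 else if j = k then 1 else 0)"
  define N :: "real^'n^'n" where "N = (\<chi> i k. if k = i0 then (if i = i0 then \<alpha> + real CARD('n) * \<beta> else 0)
      else if i = i0 then \<beta> else if i = k then \<alpha> else 0)"
  have Aij: "A$i$j = (if j = i then 1 else 0) - (if i \<noteq> i0 \<and> j = i0 then 1 else 0)" for i j
    unfolding A_def by simp
  have Cjk: "C$j$k = (if k = i0 then 1 else if j = k then 1 else 0)" for j k
    unfolding C_def by simp
  have Mij: "M$i$j = (if i = j then \<alpha> else 0) + \<beta>" for i j unfolding M_def by simp
  have Nik: "N$i$k = (if k = i0 then (if i = i0 then \<alpha> + real CARD('n) * \<beta> else 0)
      else if i = i0 then \<beta> else if i = k then \<alpha> else 0)" for i k unfolding N_def by simp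
  have dA: "det A = 1"
  proof -
    have "det A = (\<Prod>i\<in>UNIV. A$i$i)"
      by (rule det_col_diag[of i0]) (simp add: Aij)
    also have "\<dots> = 1" by (rule prod.neutral) (simp add: Aij)
    finally show ?thesis .
  qed
  have dC: "det C = 1"
  proof -
    have "det C = (\<Prod>i\<in>UNIV. C$i$i)"
      by (rule det_col_diag[of i0]) (simp add: Cjk)
    also have "\<dots> = 1" by (rule prod.neutral) (simp add: Cjk)
    finally show ?thesis .
  qed
  have rs: "(\<Sum>j\<in>UNIV. M$i$j) = \<alpha> + real CARD('n) * \<beta>" for i
    by (simp add: Mij sum.distrib)
  have AM: "(A ** M)$i$j = M$i$j - (if i \<noteq> i0 then M$i0$j else 0)" for i j
  proof -
    have "(A ** M)$i$j = (\<Sum>k\<in>UNIV. A$i$k * M$k$j)" by (simp add: matrix_matrix_mult_def)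
    also have "\<dots> = (\<Sum>k\<in>UNIV. (if k = i then M$k$j else 0) - (if i \<noteq> i0 \<and> k = i0 then M$k$j else 0))"
      by (rule sum.cong[OF refl]) (simp add: Aij left_diff_distrib)
    also have "\<dots> = (\<Sum>k\<in>UNIV. (if k = i then M$k$j else 0)) - (\<Sum>k\<in>UNIV. (if i \<noteq> i0 \<and> k = i0 then M$k$j else 0))"
      by (rule sum_subtractf)
    also have "(\<Sum>k\<in>UNIV. (if k = i then M$k$j else 0)) = M$i$j" by simp
    also have "(\<Sum>k\<in>UNIV. (if i \<noteq> i0 \<and> k = i0 then M$k$j else 0)) = (if i \<noteq> i0 then M$i0$j else 0)"
      by (cases "i = i0") simp_all
    finally show ?thesis .
  qed
  have AMC: "(A ** M) ** C = N"
  proof (subst vec_eq_iff, intro allI, subst vec_eq_iff, intro allI)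
    fix i k
    have e1: "((A ** M) ** C)$i$k = (\<Sum>j\<in>UNIV. (A ** M)$i$j * C$j$k)"
      by (simp add: matrix_matrix_mult_def)
    show "((A ** M) ** C)$i$k = N$i$k"
    proof (cases "k = i0")
      case True
      have "((A ** M) ** C)$i$k = (\<Sum>j\<in>UNIV. (A ** M)$i$j)" unfolding e1 by (simp add: Cjk True)
      also have "\<dots> = (\<Sum>j\<in>UNIV. M$i$j - (if i \<noteq> i0 then M$i0$j else 0))" by (simp add: AM)
      also have "\<dots> = (\<Sum>j\<in>UNIV. M$i$j) - (\<Sum>j\<in>UNIV. (if i \<noteq> i0 then M$i0$j else 0))"
        by (rule sum_subtractf)
      also have "\<dots> = (if i = i0 then \<alpha> + real CARD('n) * \<beta> else 0)"
        by (cases "i = i0") (simp_all add: rs)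
      finally show ?thesis by (simp add: Nik True)
    next
      case False
      have "((A ** M) ** C)$i$k = (\<Sum>j\<in>UNIV. if j = k then (A ** M)$i$j else 0)"
        unfolding e1 by (rule sum.cong[OF refl]) (simp add: Cjk False)
      also have "\<dots> = (A ** M)$i$k" by simp
      also have "\<dots> = M$i$k - (if i \<noteq> i0 then M$i0$k else 0)" by (rule AM)
      also have "\<dots> = N$i$k" using False by (cases "i = i0") (simp_all add: Mij Nik)
      finally show ?thesis .
    qed
  qed
  have "det N = det A * det M * det C" unfolding AMC[symmetric] by (simp add: det_mul)
  then have dMN: "det M = det N" using dA dC by simp
  have "det N = (\<Prod>i\<in>UNIV. N$i$i)" by (rule det_row_diag[of i0]) (simp add: Nik)
  also have "\<dots> = N$i0$i0 * (\<Prod>i\<in>UNIV-{i0}. N$i$i)" by (simp add: prod.remove)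
  also have "(\<Prod>i\<in>UNIV-{i0}. N$i$i) = (\<Prod>i\<in>UNIV-{i0}. \<alpha>)" by (rule prod.cong) (simp_all add: Nik)
  also have "\<dots> = \<alpha> ^ (CARD('n) - 1)" by (simp add: card_Diff_singleton)
  finally have "det N = (\<alpha> + real CARD('n) * \<beta>) * \<alpha> ^ (CARD('n) - 1)" by (simp add: Nik)
  then show ?thesis using dMN unfolding M_def by (simp add: mult.commute)
qed

lemma det_int: "det (\<chi> i j. real_of_int (U i j) :: real^'n::finite^'n) \<in> \<int>"
  unfolding det_def by (intro Ints_sum Ints_mult Ints_prod) auto

lemma rows_comb: "(\<chi> i. \<Sum>j\<in>UNIV. c i j *\<^sub>R (B j :: real^'n::finite)) = (\<chi> i j. c i j) ** (\<chi> i. B i)"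
  by (simp add: vec_eq_iff matrix_matrix_mult_def sum_component)

lemma in_lattice_gen: "B i \<in> lattice_gen B"
proof -
  have "(\<Sum>j\<in>UNIV. real_of_int (if j = i then 1 else 0) *\<^sub>R B j) = (\<Sum>j\<in>UNIV. if j = i then B j else 0)"
    by (rule sum.cong) auto
  also have "\<dots> = B i" by (simp add: sum.delta)
  finally show ?thesis unfolding lattice_gen_def by (intro CollectI exI[of _ "\<lambda>j. if j = i then 1 else 0"]) simp
qed

lemma covol_eq:
  fixes B :: "'n::finite \<Rightarrow> real^'n"
  assumes bas: "is_lattice_basis B" and d: "det (\<chi> i. B i) \<noteq> 0"
  shows "covol (lattice_gen B) = \<bar>det (\<chi> i. B i)\<bar>"
proof -
  define B' where "B' = (SOME B'. is_lattice_basis B' \<and> lattice_gen B' = lattice_gen B)"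
  have "is_lattice_basis B' \<and> lattice_gen B' = lattice_gen B" unfolding B'_def
    by (rule someI[of _ B]) (use bas in auto)
  then have eqL: "lattice_gen B' = lattice_gen B" by auto
  have "\<forall>i. \<exists>k. B' i = (\<Sum>j\<in>UNIV. of_int (k j) *\<^sub>R B j)"
  proof
    fix i
    have "B' i \<in> lattice_gen B" using eqL in_lattice_gen by metis
    then show "\<exists>k. B' i = (\<Sum>j\<in>UNIV. of_int (k j) *\<^sub>R B j)" unfolding lattice_gen_def by auto
  qed
  then obtain U where U: "\<And>i. B' i = (\<Sum>j\<in>UNIV. of_int (U i j) *\<^sub>R B j)" by metis
  have "\<forall>i. \<exists>k. B i = (\<Sum>j\<in>UNIV. of_int (k j) *\<^sub>R B' j)"
  proof
    fix i
    have "B i \<in> lattice_gen B'" using eqL in_lattice_gen by metis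
    then show "\<exists>k. B i = (\<Sum>j\<in>UNIV. of_int (k j) *\<^sub>R B' j)" unfolding lattice_gen_def by auto
  qed
  then obtain V where V: "\<And>i. B i = (\<Sum>j\<in>UNIV. of_int (V i j) *\<^sub>R B' j)" by metis
  define MU :: "real^'n^'n" where "MU = (\<chi> i j. real_of_int (U i j))"
  define MV :: "real^'n^'n" where "MV = (\<chi> i j. real_of_int (V i j))"
  have eU: "(\<chi> i. B' i) = MU ** (\<chi> i. B i)"
    unfolding MU_def using rows_comb[of "\<lambda>i j. real_of_int (U i j)" B] U by simp
  have eV: "(\<chi> i. B i) = MV ** (\<chi> i. B' i)"
    unfolding MV_def using rows_comb[of "\<lambda>i j. real_of_int (V i j)" B'] V by simp
  have "det (\<chi> i. B i) = det MV * det MU * det (\<chi> i. B i)"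
    by (metis eU eV det_mul mult.assoc)
  then have "det MV * det MU = 1" using d by simp
  moreover obtain p where p: "det MU = of_int p" using det_int[of U] unfolding MU_def by (metis Ints_cases)
  moreover obtain q where q: "det MV = of_int q" using det_int[of V] unfolding MV_def by (metis Ints_cases)
  ultimately have "q * p = 1" by (metis of_int_eq_1_iff of_int_mult)
  then have "\<bar>p\<bar> = 1" by (metis zmult_eq_1_iff abs_1 abs_minus)
  then have "\<bar>det MU\<bar> = 1" using p by simp
  have "covol (lattice_gen B) = \<bar>det (\<chi> i. B' i)\<bar>" unfolding covol_def B'_def ..
  also have "\<dots> = \<bar>det (\<chi> i. B i)\<bar>" using eU \<open>\<bar>det MU\<bar> = 1\<close> by (simp add: det_mul abs_mult)
  finally show ?thesis .
qed




lemma int_sq_ge_abs: "\<bar>x::int\<bar> \<le> x^2"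
proof (cases "x = 0")
  case False
  then have "1 \<le> \<bar>x\<bar>" by simp
  then have "\<bar>x\<bar> * 1 \<le> \<bar>x\<bar> * \<bar>x\<bar>" by (intro mult_left_mono) auto
  then show ?thesis by (simp add: power2_eq_square abs_mult[symmetric])
qed simp

lemma even_abs_minus: "even (\<bar>x::int\<bar> - x)"
  by (cases "x \<ge> 0") auto

lemma int_vec_facts:
  fixes k :: "'n::finite \<Rightarrow> int"
  assumes nz: "k i0 \<noteq> 0"
  shows "\<bar>sum k UNIV\<bar> \<le> (\<Sum>i\<in>UNIV. (k i)^2)"
    and "sum k UNIV = 0 \<Longrightarrow> 2 \<le> (\<Sum>i\<in>UNIV. (k i)^2)"
    and "(real_of_int (sum k UNIV))^2 \<le> real CARD('n) * (\<Sum>i\<in>UNIV. (real_of_int (k i))^2)"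
proof -
  have A: "(\<Sum>i\<in>UNIV. \<bar>k i\<bar>) \<le> (\<Sum>i\<in>UNIV. (k i)^2)" by (intro sum_mono int_sq_ge_abs)
  show "\<bar>sum k UNIV\<bar> \<le> (\<Sum>i\<in>UNIV. (k i)^2)" using A sum_abs[of k UNIV] by linarith
  show "2 \<le> (\<Sum>i\<in>UNIV. (k i)^2)" if t0: "sum k UNIV = 0"
  proof -
    have "even (\<Sum>i\<in>UNIV. \<bar>k i\<bar> - k i)" by (intro dvd_sum) (simp add: even_abs_minus)
    then have ev: "even (\<Sum>i\<in>UNIV. \<bar>k i\<bar>)" using t0 by (simp add: sum_subtractf)
    have "\<bar>k i0\<bar> \<le> (\<Sum>i\<in>UNIV. \<bar>k i\<bar>)" by (rule member_le_sum) auto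
    then have "1 \<le> (\<Sum>i\<in>UNIV. \<bar>k i\<bar>)" using nz by linarith
    with ev have "2 \<le> (\<Sum>i\<in>UNIV. \<bar>k i\<bar>)" by presburger
    then show ?thesis using A by linarith
  qed
  define w :: "real^'n" where "w = (\<chi> i. real_of_int (k i))"
  define o1 :: "real^'n" where "o1 = (\<chi> i. 1)"
  have "(inner w o1)^2 \<le> inner w w * inner o1 o1" by (rule Cauchy_Schwarz_ineq)
  moreover have "inner w o1 = real_of_int (sum k UNIV)" by (simp add: w_def o1_def inner_vec_def)
  moreover have "inner w w = (\<Sum>i\<in>UNIV. (real_of_int (k i))^2)" by (simp add: w_def inner_vec_def power2_eq_square)
  moreover have "inner o1 o1 = real CARD('n)" by (simp add: o1_def inner_vec_def)
  ultimately show "(real_of_int (sum k UNIV))^2 \<le> real CARD('n) * (\<Sum>i\<in>UNIV. (real_of_int (k i))^2)"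
    by (simp add: mult.commute)
qed

lemma q_bound:
  fixes N :: nat and S t u :: real
  assumes N2: "N \<ge> 2" and u0: "u > 0" and St: "\<bar>t\<bar> \<le> S" and CS: "t^2 \<le> real N * S"
    and t0: "t = 0 \<Longrightarrow> 2 \<le> S" and t1: "t \<noteq> 0 \<Longrightarrow> 1 \<le> \<bar>t\<bar>"
  shows "min 2 (min ((real N - 1 + u) / real N) (real N * u)) \<le> S - t^2 / real N + u * t^2 / real N"
proof -
  define m0 where "m0 = min 2 (min ((real N - 1 + u) / real N) (real N * u))"
  have N0: "real N > 0" using N2 by simp
  have rhs: "S - t^2 / real N + u * t^2 / real N = S - (1 - u) * t^2 / real N"
    by (simp add: algebra_simps diff_divide_distrib add_divide_distrib)
  show ?thesis
  proof (cases "t = 0")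
    case True then show ?thesis using t0 by simp
  next
    case tnz: False
    then have ta: "1 \<le> \<bar>t\<bar>" using t1 by simp
    have tsq: "1 \<le> t^2" using ta by (metis abs_ge_self abs_le_square_iff abs_one one_power2 power2_abs)
    show ?thesis
    proof (cases "u \<ge> 1")
      case True
      have "(u - 1) * 1 \<le> (u - 1) * t^2" using True tsq by (intro mult_left_mono) auto
      then have "(u - 1) / real N \<le> (u - 1) * t^2 / real N" using N0 by (simp add: divide_right_mono)
      moreover have "1 \<le> S" using St ta by linarith
      moreover have "S - (1 - u) * t^2 / real N = S + (u - 1) * t^2 / real N" by (simp add: algebra_simps diff_divide_distrib)
      moreover have "(real N - 1 + u) / real N = 1 + (u - 1) / real N" using N0 by (simp add: field_simps)
      ultimately have "(real N - 1 + u) / real N \<le> S - (1 - u) * t^2 / real N" by linarith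
      then show ?thesis using rhs by (simp add: min_le_iff_disj)
    next
      case False
      then have u1: "0 \<le> 1 - u" by simp
      define tau where "tau = \<bar>t\<bar>"
      have tau_sq: "t^2 = tau * tau" unfolding tau_def by (simp add: power2_eq_square abs_mult[symmetric])
      show ?thesis
      proof (cases "tau \<ge> real N")
        case True
        have "t^2 / real N \<le> S" using CS N0 by (simp add: divide_le_eq mult.commute)
        moreover have "u * (t^2 / real N) - (S - (1 - u) * (t^2 / real N)) = t^2 / real N - S"
          by (simp add: algebra_simps add_divide_distrib[symmetric])
        ultimately have "u * (t^2 / real N) \<le> S - (1 - u) * (t^2 / real N)" by linarith
        moreover have "real N * real N \<le> t^2" unfolding tau_sq using True N0 by (intro mult_mono) auto
        then have "real N \<le> t^2 / real N" using N0 by (simp add: le_divide_eq)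
        then have "u * real N \<le> u * (t^2 / real N)" using u0 by (intro mult_left_mono) auto
        ultimately have "real N * u \<le> S - (1 - u) * t^2 / real N" by (simp add: mult.commute)
        then show ?thesis using rhs by (simp add: min_le_iff_disj)
      next
        case False
        define g where "g = tau - (1 - u) * t^2 / real N"
        have Sg: "g \<le> S - (1 - u) * t^2 / real N" unfolding g_def tau_def using St by simp
        have id: "(real N - 1) * g = (real N - tau) * ((real N - 1 + u) / real N) + (tau - 1) * (real N * u)
             + (real N - 1) * (1 - u) * (tau - 1) * (real N - tau) / real N"
          unfolding g_def tau_sq using N0 by (simp add: field_simps)
        have m1: "m0 \<le> (real N - 1 + u) / real N" and m2: "m0 \<le> real N * u" unfolding m0_def by auto
        have tau1: "1 \<le> tau" using ta tau_def by simp
        have a1: "(real N - tau) * m0 \<le> (real N - tau) * ((real N - 1 + u) / real N)"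
          using m1 False by (intro mult_left_mono) auto
        have a2: "(tau - 1) * m0 \<le> (tau - 1) * (real N * u)" using m2 tau1 by (intro mult_left_mono) auto
        have a3: "0 \<le> (real N - 1) * (1 - u) * (tau - 1) * (real N - tau) / real N"
          using N2 u1 tau1 False N0 by (intro divide_nonneg_pos mult_nonneg_nonneg) auto
        have "(real N - 1) * m0 \<le> (real N - 1) * g" using a1 a2 a3 id by (simp add: algebra_simps)
        then have "m0 \<le> g" using N2 by simp
        then show ?thesis using Sg rhs m0_def by simp
      qed
    qed
  qed
qed




lemma norm_comb:
  fixes B :: "'n::finite \<Rightarrow> real^'n" and k :: "'n \<Rightarrow> int"
  assumes G: "\<And>i j. B i \<bullet> B j = (if i = j then \<alpha> else 0) + \<beta>"
  shows "(norm (\<Sum>i\<in>UNIV. of_int (k i) *\<^sub>R B i))^2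
     = \<alpha> * (\<Sum>i\<in>UNIV. (real_of_int (k i))^2) + \<beta> * (\<Sum>i\<in>UNIV. real_of_int (k i))^2"
proof -
  have "(norm (\<Sum>i\<in>UNIV. of_int (k i) *\<^sub>R B i))^2
      = (\<Sum>i\<in>UNIV. \<Sum>j\<in>UNIV. of_int (k i) * (of_int (k j) * (B j \<bullet> B i)))"
    unfolding power2_norm_eq_inner by (simp add: inner_sum_left inner_sum_right sum_distrib_left)
  also have "\<dots> = (\<Sum>i\<in>UNIV. \<alpha> * (real_of_int (k i))^2 + \<beta> * real_of_int (k i) * (\<Sum>j\<in>UNIV. real_of_int (k j)))"
  proof (rule sum.cong[OF refl])
    fix i
    have "(\<Sum>j\<in>UNIV. of_int (k i) * (of_int (k j) * (B j \<bullet> B i)))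
        = (\<Sum>j\<in>UNIV. (if j = i then \<alpha> * (real_of_int (k i))^2 else 0) + \<beta> * real_of_int (k i) * real_of_int (k j))"
      by (rule sum.cong[OF refl]) (simp add: G power2_eq_square algebra_simps)
    also have "\<dots> = \<alpha> * (real_of_int (k i))^2 + \<beta> * real_of_int (k i) * (\<Sum>j\<in>UNIV. real_of_int (k j))"
      by (simp add: sum.distrib sum_distrib_left)
    finally show "(\<Sum>j\<in>UNIV. of_int (k i) * (of_int (k j) * (B j \<bullet> B i)))
      = \<alpha> * (real_of_int (k i))^2 + \<beta> * real_of_int (k i) * (\<Sum>j\<in>UNIV. real_of_int (k j))" .
  qed
  also have "\<dots> = \<alpha> * (\<Sum>i\<in>UNIV. (real_of_int (k i))^2) + \<beta> * (\<Sum>i\<in>UNIV. real_of_int (k i))^2"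
    by (simp add: sum.distrib sum_distrib_left[symmetric] sum_distrib_right[symmetric] power2_eq_square mult.assoc)
  finally show ?thesis .
qed

lemma lattice_diff:
  assumes "x \<in> lattice_gen B" "y \<in> lattice_gen B" shows "x - y \<in> lattice_gen B"
proof -
  obtain k where k: "x = (\<Sum>i\<in>UNIV. of_int (k i) *\<^sub>R B i)" using assms(1) unfolding lattice_gen_def by auto
  obtain k' where k': "y = (\<Sum>i\<in>UNIV. of_int (k' i) *\<^sub>R B i)" using assms(2) unfolding lattice_gen_def by auto
  have "x - y = (\<Sum>i\<in>UNIV. of_int (k i - k' i) *\<^sub>R B i)"
    unfolding k k' by (simp add: sum_subtractf scaleR_diff_left)
  then show ?thesis unfolding lattice_gen_def by (intro CollectI exI[of _ "\<lambda>i. k i - k' i"]) simp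
qed

lemma mu_pow:
  fixes N :: nat and u :: real
  assumes N2: "N \<ge> 2" and lo: "1 / (real N + 1) \<le> u" and hi: "u \<le> real N + 1"
  shows "u \<le> (min 2 (min ((real N - 1 + u) / real N) (real N * u))) ^ N"
proof -
  have "0 < 1 / (real N + 1)" by simp
  then have u0: "u > 0" using lo by linarith
  have a: "u \<le> 2 ^ N" using hi pow2_ge[of N] by simp
  have b: "u \<le> ((real N - 1 + u) / real N) ^ N" using lower_pow1[of N u] N2 u0 by simp
  have c: "u \<le> (real N * u) ^ N" using lower_pow2[OF N2 lo] .
  show ?thesis unfolding min_def using a b c by auto
qed

theorem mainTheorem5:
  fixes e :: "'n::finite \<Rightarrow> real^'n" and a h :: real and r s m :: int
  assumes n2: "CARD('n) \<ge> 2"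
    and tame: "tame_basis e a h"
    and r_ne: "r \<noteq> 0" and r_lt: "\<bar>r\<bar> < int CARD('n)"
    and m_def: "m = r + s * int CARD('n)"
    and lo: "(real CARD('n) * a - 1) / (real CARD('n) ^ 2 - 1) \<le> (real_of_int m / real_of_int r) ^ 2"
    and hi: "(real_of_int m / real_of_int r) ^ 2 \<le>
               (real CARD('n) * a - 1) * (real CARD('n) + 1) / (real CARD('n) - 1)"
  shows "1 / 2 ^ CARD('n) \<le> center_density (twist_lattice (of_int r) (of_int s) (\<Sum>i\<in>UNIV. e i) (lattice_gen e))
       \<and> center_density (twist_lattice (of_int r) (of_int s) (\<Sum>i\<in>UNIV. e i) (lattice_gen e))
           \<le> 1 / (2 powr (real CARD('n) / 2) * sqrt (real CARD('n) + 1))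
       \<and> ((real_of_int m / real_of_int r) ^ 2 = (real CARD('n) * a - 1) / (real CARD('n) - 1) \<longrightarrow>
           center_density (twist_lattice (of_int r) (of_int s) (\<Sum>i\<in>UNIV. e i) (lattice_gen e)) = 1 / 2 ^ CARD('n))
       \<and> ((real_of_int m / real_of_int r) ^ 2 = (real CARD('n) * a - 1) * (real CARD('n) + 1) / (real CARD('n) - 1) \<longrightarrow>
           center_density (twist_lattice (of_int r) (of_int s) (\<Sum>i\<in>UNIV. e i) (lattice_gen e))
             = 1 / (2 powr (real CARD('n) / 2) * sqrt (real CARD('n) + 1)))"
proof -
  define N where "N = CARD('n)"
  define v where "v = (\<Sum>i\<in>UNIV. e i)"
  have N2: "N \<ge> 2" using n2 N_def by simp
  have N0: "real N > 0" using N2 by simp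
  from tame have bas: "is_lattice_basis e" and ev: "\<And>i. e i \<bullet> v = 1"
     and ea: "\<And>i. e i \<bullet> e i = a" and eh: "\<And>i j. i \<noteq> j \<Longrightarrow> e i \<bullet> e j = - h"
    unfolding tame_basis_def v_def Let_def by auto
  define c where "c = a + h"
  have G: "e i \<bullet> e j = (if i = j then c else 0) - h" for i j using ea eh by (auto simp: c_def)
  obtain i1 :: 'n where True by blast
  have "card (UNIV - {i1}) = N - 1" unfolding N_def by (simp add: card_Diff_singleton)
  then have "card (UNIV - {i1}) \<noteq> 0" using N2 by simp
  then obtain i2 where "i2 \<in> UNIV - {i1}" by (metis card.empty ex_in_conv)
  then have i12: "i1 \<noteq> i2" by auto
  have c1: "c - real N * h = 1"
  proof -
    have "1 = e i1 \<bullet> v" using ev by simp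
    also have "\<dots> = (\<Sum>j\<in>UNIV. e i1 \<bullet> e j)" unfolding v_def by (simp add: inner_sum_right)
    also have "\<dots> = (\<Sum>j\<in>UNIV. (if i1 = j then c else 0) - h)" by (simp add: G)
    also have "\<dots> = c - real N * h" by (simp add: sum_subtractf N_def)
    finally show ?thesis by simp
  qed
  have vv: "v \<bullet> v = real N"
  proof -
    have "v \<bullet> v = (\<Sum>i\<in>UNIV. e i \<bullet> v)" by (simp add: v_def inner_sum_left)
    then show ?thesis using ev N_def by simp
  qed
  have injE: "inj e" using bas unfolding is_lattice_basis_def by simp
  have cpos: "c > 0"
  proof -
    have "e i1 \<noteq> e i2" using injE i12 by (metis injD)
    then have "0 < (e i1 - e i2) \<bullet> (e i1 - e i2)" by simp
    also have "\<dots> = 2 * c" using i12 by (simp add: inner_diff_left inner_diff_right G inner_commute[of "e i2" "e i1"])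
    finally show ?thesis by simp
  qed
  define R where "R = real_of_int r"
  define Sr where "Sr = real_of_int s"
  define B where "B = (\<lambda>i. R *\<^sub>R e i + Sr *\<^sub>R v)"
  define \<alpha> where "\<alpha> = R^2 * c"
  define \<beta> where "\<beta> = 2 * R * Sr + Sr^2 * real N - R^2 * h"
  have GB: "B i \<bullet> B j = (if i = j then \<alpha> else 0) + \<beta>" for i j
  proof -
    have ve: "v \<bullet> e j = e j \<bullet> v" by (rule inner_commute)
    have "B i \<bullet> B j = R * R * (e i \<bullet> e j) + R * Sr * (e i \<bullet> v) + Sr * R * (e j \<bullet> v) + Sr * Sr * (v \<bullet> v)"
      unfolding B_def by (simp add: inner_add_left inner_add_right ve algebra_simps)
    then show ?thesis unfolding \<alpha>_def \<beta>_def by (cases "i = j") (simp_all add: G ev vv power2_eq_square algebra_simps)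
  qed
  have Rnz: "R \<noteq> 0" using r_ne R_def by simp
  have apos: "\<alpha> > 0" unfolding \<alpha>_def using Rnz cpos by simp
  have mreal: "real_of_int m = R + Sr * real N" using m_def R_def Sr_def N_def by simp
  have cN: "c = 1 + real N * h" using c1 by simp
  have ab: "\<alpha> + real N * \<beta> = (real_of_int m)^2"
    unfolding \<alpha>_def \<beta>_def mreal cN by (simp add: power2_eq_square algebra_simps)
  have mnz: "m \<noteq> 0"
  proof
    assume m0: "m = 0"
    then have rr: "r = - s * int N" using m_def N_def by simp
    show False
    proof (cases "s = 0")
      case True then show False using rr r_ne by simp
    next
      case False
      then have "1 * int N \<le> \<bar>s\<bar> * int N" by (intro mult_right_mono) auto
      then have "int N \<le> \<bar>r\<bar>" using rr by (simp add: abs_mult)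
      then show False using r_lt N_def by simp
    qed
  qed
  have m2pos: "(real_of_int m)^2 > 0" using mnz by simp
  define u where "u = (real_of_int m)^2 / \<alpha>"
  have upos: "u > 0" unfolding u_def using m2pos apos by simp
  have mu: "(real_of_int m)^2 = u * \<alpha>" unfolding u_def using apos by simp
  have beq: "\<beta> = (u - 1) * \<alpha> / real N" using ab mu N0 by (simp add: field_simps)
  have rho: "(real_of_int m / real_of_int r)^2 = u * c"
    unfolding power_divide mu \<alpha>_def using Rnz R_def by simp
  have aa: "a = 1 + real N * h - h" using cN c_def by simp
  have na: "real N * a - 1 = (real N - 1) * c" unfolding aa cN by (simp add: algebra_simps)
  have N1: "real N - 1 > 0" using N2 by simp
  have ulo: "1 / (real N + 1) \<le> u"
  proof -
    have sq: "real N ^ 2 - 1 = (real N - 1) * (real N + 1)" by (simp add: power2_eq_square algebra_simps)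
    have "(real N * a - 1) / (real N ^ 2 - 1) = c / (real N + 1)"
      unfolding na sq using N1 by simp
    then have "c / (real N + 1) \<le> u * c" using lo rho unfolding N_def by simp
    then have "c * (1 / (real N + 1)) \<le> c * u" by (simp add: mult.commute)
    then show ?thesis using cpos mult_le_cancel_left_pos by blast
  qed
  have hiq: "(real N * a - 1) * (real N + 1) / (real N - 1) = c * (real N + 1)"
    unfolding na using N1 by (simp add: field_simps)
  have uhi: "u \<le> real N + 1"
  proof -
    have "u * c \<le> c * (real N + 1)" using hi rho hiq unfolding N_def by simp
    then have "c * u \<le> c * (real N + 1)" by (simp add: mult.commute)
    then show ?thesis using cpos mult_le_cancel_left_pos by blast
  qed
  have TL: "twist_lattice (of_int r) (of_int s) (\<Sum>i\<in>UNIV. e i) (lattice_gen e) = lattice_gen B"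
  proof -
    have T: "of_int r *\<^sub>R (\<Sum>i\<in>UNIV. of_int (k i) *\<^sub>R e i) + (of_int s * ((\<Sum>i\<in>UNIV. of_int (k i) *\<^sub>R e i) \<bullet> v)) *\<^sub>R v
        = (\<Sum>i\<in>UNIV. of_int (k i) *\<^sub>R B i)" for k :: "'n \<Rightarrow> int"
    proof -
      have "(\<Sum>i\<in>UNIV. of_int (k i) *\<^sub>R e i) \<bullet> v = (\<Sum>i\<in>UNIV. real_of_int (k i))"
        by (simp add: inner_sum_left ev)
      moreover have "(\<Sum>i\<in>UNIV. of_int (k i) *\<^sub>R B i)
          = (\<Sum>i\<in>UNIV. R *\<^sub>R (of_int (k i) *\<^sub>R e i)) + (\<Sum>i\<in>UNIV. (Sr * of_int (k i)) *\<^sub>R v)"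
        unfolding B_def by (simp add: scaleR_add_right sum.distrib mult.commute)
      moreover have "(\<Sum>i\<in>UNIV. (Sr * of_int (k i)) *\<^sub>R v) = (Sr * (\<Sum>i\<in>UNIV. real_of_int (k i))) *\<^sub>R v"
        by (simp add: scaleR_sum_left sum_distrib_left)
      ultimately show ?thesis unfolding R_def Sr_def by (simp add: scaleR_sum_right)
    qed
    show ?thesis unfolding twist_lattice_def lattice_gen_def v_def[symmetric]
    proof (intro set_eqI iffI)
      fix y assume "y \<in> (\<lambda>x. of_int r *\<^sub>R x + (of_int s * (x \<bullet> v)) *\<^sub>R v) ` {\<Sum>i\<in>UNIV. of_int (k i) *\<^sub>R e i |k. True}"
      then obtain k where "y = of_int r *\<^sub>R (\<Sum>i\<in>UNIV. of_int (k i) *\<^sub>R e i) + (of_int s * ((\<Sum>i\<in>UNIV. of_int (k i) *\<^sub>R e i) \<bullet> v)) *\<^sub>R v"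
        by auto
      then have "y = (\<Sum>i\<in>UNIV. of_int (k i) *\<^sub>R B i)" using T by simp
      then show "y \<in> {\<Sum>i\<in>UNIV. of_int (k i) *\<^sub>R B i |k. True}" by blast
    next
      fix y assume "y \<in> {\<Sum>i\<in>UNIV. of_int (k i) *\<^sub>R B i |k. True}"
      then obtain k where "y = (\<Sum>i\<in>UNIV. of_int (k i) *\<^sub>R B i)" by auto
      then have "y = (\<lambda>x. of_int r *\<^sub>R x + (of_int s * (x \<bullet> v)) *\<^sub>R v) (\<Sum>i\<in>UNIV. of_int (k i) *\<^sub>R e i)"
        using T[of k] by simp
      then show "y \<in> (\<lambda>x. of_int r *\<^sub>R x + (of_int s * (x \<bullet> v)) *\<^sub>R v) ` {\<Sum>i\<in>UNIV. of_int (k i) *\<^sub>R e i |k. True}"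
        by blast
    qed
  qed
  define MB :: "real^'n^'n" where "MB = (\<chi> i. B i)"
  have gram: "MB ** transpose MB = (\<chi> i j. (if i = j then \<alpha> else 0) + \<beta>)"
  proof -
    have "(MB ** transpose MB)$i$j = B i \<bullet> B j" for i j
      by (simp add: MB_def matrix_matrix_mult_def transpose_def inner_vec_def)
    then show ?thesis by (simp add: vec_eq_iff GB)
  qed
  have dsq: "(det MB)^2 = \<alpha>^N * u"
  proof -
    have "(det MB)^2 = det (MB ** transpose MB)" by (simp add: det_mul power2_eq_square)
    also have "\<dots> = \<alpha>^(N-1) * (real_of_int m)^2" unfolding gram det_gram N_def[symmetric] ab ..
    also have "\<dots> = \<alpha>^(N-1) * \<alpha> * u" unfolding mu by simp
    also have "\<alpha>^(N-1) * \<alpha> = \<alpha>^N"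
    proof -
      obtain k where "N = Suc k" using N2 by (cases N) auto
      then show ?thesis by (simp add: mult.commute)
    qed
    finally show ?thesis .
  qed
  have "(det MB)^2 > 0" unfolding dsq using apos upos by simp
  then have dnz: "det MB \<noteq> 0" by auto
  define T where "T = (\<lambda>x::real^'n. R *\<^sub>R x + (Sr * (x \<bullet> v)) *\<^sub>R v)"
  have linT: "linear T" unfolding T_def
    by (rule linearI) (simp_all add: inner_add_left algebra_simps scaleR_add_left)
  have injT: "inj T"
  proof -
    have "x = 0" if "T x = 0" for x
    proof -
      have "T x \<bullet> v = 0" using that by simp
      then have "(x \<bullet> v) * (R + Sr * real N) = 0" unfolding T_def by (simp add: inner_add_left vv algebra_simps)
      then have xv: "x \<bullet> v = 0" using mreal mnz by simp
      then have "R *\<^sub>R x = 0" using that unfolding T_def by simp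
      then show "x = 0" using Rnz by simp
    qed
    then show ?thesis using linear_injective_0[OF linT] by blast
  qed
  have rB: "range B = T ` range e" unfolding B_def T_def by (auto simp: ev image_iff)
  have basB: "is_lattice_basis B"
  proof -
    have "inj B"
    proof (rule injI)
      fix i j assume "B i = B j"
      then have "R *\<^sub>R e i = R *\<^sub>R e j" unfolding B_def by simp
      then have "e i = e j" using Rnz by simp
      then show "i = j" using injE by (metis injD)
    qed
    moreover have "independent (range B)" unfolding rB
      by (rule linear_independent_injective_image[OF linT]) (use bas injT in \<open>auto simp: is_lattice_basis_def intro: inj_on_subset\<close>)
    ultimately show ?thesis unfolding is_lattice_basis_def by simp
  qed
  define D where "D = sqrt (\<alpha>^N * u)"
  have covB: "covol (lattice_gen B) = D"
  proof -
    have "covol (lattice_gen B) = \<bar>det MB\<bar>" unfolding MB_def by (rule covol_eq[OF basB dnz[unfolded MB_def]])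
    also have "\<dots> = sqrt ((det MB)^2)" by simp
    finally show ?thesis unfolding dsq D_def .
  qed
  have Dpos: "D > 0" unfolding D_def using apos upos by simp
  define x1 where "x1 = (real N - 1 + u) / real N"
  define \<mu> where "\<mu> = min 2 (min x1 (real N * u))"
  define X where "X = {norm x |x. x \<in> lattice_gen B \<and> x \<noteq> 0}"
  have lam: "lambda1 (lattice_gen B) = Inf X" unfolding lambda1_def X_def ..
  have lowX: "sqrt (\<alpha> * \<mu>) \<le> y" if yX: "y \<in> X" for y
  proof -
    obtain x where y: "y = norm x" and xL: "x \<in> lattice_gen B" and xnz: "x \<noteq> 0" using yX unfolding X_def by auto
    obtain k where k: "x = (\<Sum>i\<in>UNIV. of_int (k i) *\<^sub>R B i)" using xL unfolding lattice_gen_def by auto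
    have "\<exists>i0. k i0 \<noteq> 0"
    proof (rule ccontr)
      assume "\<nexists>i0. k i0 \<noteq> 0"
      then have "x = 0" unfolding k by simp
      then show False using xnz by simp
    qed
    then obtain i0 where ki0: "k i0 \<noteq> 0" by blast
    define S where "S = (\<Sum>i\<in>UNIV. (real_of_int (k i))^2)"
    define t where "t = (\<Sum>i\<in>UNIV. real_of_int (k i))"
    have tS: "t = real_of_int (sum k UNIV)" unfolding t_def by simp
    have SS: "S = real_of_int (\<Sum>i\<in>UNIV. (k i)^2)" unfolding S_def by simp
    note F = int_vec_facts[of k i0, OF ki0]
    have f1: "\<bar>t\<bar> \<le> S" unfolding tS SS using F(1) by linarith
    have f2: "2 \<le> S" if "t = 0"
    proof -
      have "sum k UNIV = 0" by (metis that tS of_int_eq_0_iff)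
      then have "2 \<le> (\<Sum>i\<in>UNIV. (k i)^2)" using F(2) by simp
      then have "(2::real) \<le> real_of_int (\<Sum>i\<in>UNIV. (k i)^2)" by (metis of_int_le_iff of_int_numeral)
      then show ?thesis using SS by linarith
    qed
    have f3: "t^2 \<le> real N * S" unfolding t_def S_def N_def using F(3) by simp
    have f4: "1 \<le> \<bar>t\<bar>" if "t \<noteq> 0"
    proof -
      have "sum k UNIV \<noteq> 0" by (metis that tS of_int_0)
      then have "(1::int) \<le> \<bar>sum k UNIV\<bar>" by linarith
      then show ?thesis unfolding tS by (metis of_int_abs of_int_le_iff of_int_1)
    qed
    have qb: "\<mu> \<le> S - t^2 / real N + u * t^2 / real N"
      unfolding \<mu>_def x1_def by (rule q_bound[OF N2 upos f1 f3 f2 f4])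
    have "(norm x)^2 = \<alpha> * S + \<beta> * t^2" unfolding k S_def t_def by (rule norm_comb[OF GB])
    also have "\<dots> = \<alpha> * (S - t^2 / real N + u * t^2 / real N)" unfolding beq using N0
      by (simp add: field_simps)
    finally have nx: "(norm x)^2 = \<alpha> * (S - t^2 / real N + u * t^2 / real N)" .
    have "\<alpha> * \<mu> \<le> (norm x)^2" unfolding nx using qb apos by (intro mult_left_mono) auto
    then have "sqrt (\<alpha> * \<mu>) \<le> sqrt ((norm x)^2)" by (rule real_sqrt_le_mono)
    then show ?thesis using y by simp
  qed
  have x1pos: "x1 > 0" unfolding x1_def using N2 upos by simp
  have nB1: "(norm (B i1))^2 = \<alpha> * x1"
    unfolding power2_norm_eq_inner GB x1_def beq using N0 by (simp add: field_simps)
  have nB12: "(norm (B i1 - B i2))^2 = 2 * \<alpha>"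
    unfolding power2_norm_eq_inner using i12 by (simp add: inner_diff_left inner_diff_right GB)
  have B1X: "sqrt (\<alpha> * x1) \<in> X"
  proof -
    have "norm (B i1) = sqrt ((norm (B i1))^2)" by simp
    then have "norm (B i1) = sqrt (\<alpha> * x1)" unfolding nB1 .
    moreover have "B i1 \<noteq> 0" using nB1 apos x1pos by auto
    ultimately show ?thesis unfolding X_def using in_lattice_gen[of B i1]
      by (intro CollectI exI[of _ "B i1"]) simp
  qed
  have B12X: "sqrt (2 * \<alpha>) \<in> X"
  proof -
    have "norm (B i1 - B i2) = sqrt ((norm (B i1 - B i2))^2)" by simp
    then have "norm (B i1 - B i2) = sqrt (2 * \<alpha>)" unfolding nB12 .
    moreover have "B i1 - B i2 \<noteq> 0" using nB12 apos by auto
    moreover have "B i1 - B i2 \<in> lattice_gen B" by (intro lattice_diff in_lattice_gen)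
    ultimately show ?thesis unfolding X_def by (intro CollectI exI[of _ "B i1 - B i2"]) simp
  qed
  have bdd: "bdd_below X" unfolding X_def by (rule bdd_belowI[of _ 0]) auto
  have Xne: "X \<noteq> {}" using B1X by auto
  define L where "L = lambda1 (lattice_gen B)"
  have Llo: "sqrt (\<alpha> * \<mu>) \<le> L" unfolding L_def lam using Xne lowX by (intro cInf_greatest) auto
  have Lhi1: "L \<le> sqrt (\<alpha> * x1)" unfolding L_def lam by (rule cInf_lower[OF B1X bdd])
  have Lhi2: "L \<le> sqrt (2 * \<alpha>)" unfolding L_def lam by (rule cInf_lower[OF B12X bdd])
  have mupos: "\<mu> > 0" unfolding \<mu>_def using x1pos upos N0 by simp
  have "0 \<le> sqrt (\<alpha> * \<mu>)" using apos mupos by simp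
  then have L0: "0 \<le> L" using Llo by linarith
  have cd: "center_density (twist_lattice (of_int r) (of_int s) (\<Sum>i\<in>UNIV. e i) (lattice_gen e))
      = L ^ N / (2 ^ N * D)"
    unfolding TL center_density_def covB L_def N_def ..
  have p2: "2 powr (real N / 2) = sqrt (2 ^ N)"
    by (simp add: powr_half_sqrt_powr powr_realpow)
  have s2: "sqrt ((2::real) ^ N) * sqrt (2 ^ N) = 2 ^ N" by simp
  have part1: "1 / 2 ^ N \<le> L ^ N / (2 ^ N * D)"
  proof -
    have "u \<le> \<mu> ^ N" unfolding \<mu>_def x1_def by (rule mu_pow[OF N2 ulo uhi])
    then have "\<alpha>^N * u \<le> \<alpha>^N * \<mu>^N" using apos by (intro mult_left_mono) auto
    then have "D \<le> sqrt ((\<alpha> * \<mu>)^N)" unfolding D_def by (simp add: power_mult_distrib)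
    also have "\<dots> = sqrt (\<alpha> * \<mu>) ^ N" by (rule real_sqrt_power)
    also have "\<dots> \<le> L ^ N" using Llo apos mupos by (intro power_mono) simp_all
    finally have "D \<le> L ^ N" .
    then show ?thesis using Dpos by (simp add: field_simps)
  qed
  have part2: "L ^ N / (2 ^ N * D) \<le> 1 / (2 powr (real N / 2) * sqrt (real N + 1))"
  proof -
    have ui: "x1 ^ N * (real N + 1) \<le> 2 ^ N * u" unfolding x1_def by (rule upper_ineq[OF N2 ulo uhi])
    have "L ^ N \<le> sqrt (\<alpha> * x1) ^ N" using Lhi1 L0 by (intro power_mono) auto
    also have "\<dots> = sqrt ((\<alpha> * x1) ^ N)" by (simp add: real_sqrt_power)
    finally have LN: "L ^ N \<le> sqrt (\<alpha>^N * x1^N)" by (simp add: power_mult_distrib)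
    have "L ^ N * (sqrt (2 ^ N) * sqrt (real N + 1)) \<le> sqrt (\<alpha>^N * x1^N) * (sqrt (2 ^ N) * sqrt (real N + 1))"
      using LN by (intro mult_right_mono) auto
    also have "\<dots> = sqrt (\<alpha>^N * 2^N * (x1^N * (real N + 1)))" by (simp add: real_sqrt_mult mult_ac)
    also have "\<dots> \<le> sqrt (\<alpha>^N * 2^N * (2^N * u))" using ui apos
      by (intro real_sqrt_le_mono mult_left_mono) auto
    also have "\<dots> = 2^N * D" unfolding D_def using s2 by (simp add: real_sqrt_mult mult_ac)
    finally have "L ^ N * (sqrt (2 ^ N) * sqrt (real N + 1)) \<le> 2^N * D" .
    then show ?thesis unfolding p2 using Dpos by (simp add: field_simps)
  qed
  have part3: "L ^ N / (2 ^ N * D) = 1 / 2 ^ N" if u1: "u = 1"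
  proof -
    have "\<mu> = 1" unfolding \<mu>_def x1_def u1 using N2 N0 by simp
    moreover have "x1 = 1" unfolding x1_def u1 using N0 by simp
    ultimately have "L = sqrt \<alpha>" using Llo Lhi1 by simp
    then have "L ^ N = D" unfolding D_def u1 by (simp add: real_sqrt_power)
    then show ?thesis using Dpos by simp
  qed
  have part4: "L ^ N / (2 ^ N * D) = 1 / (2 powr (real N / 2) * sqrt (real N + 1))" if u1: "u = real N + 1"
  proof -
    have "\<mu> = 2"
    proof -
      have "x1 = 2" unfolding x1_def u1 using N0 by (simp add: field_simps)
      moreover have "2 * 1 \<le> real N * u" unfolding u1 using N2 by (intro mult_mono) auto
      ultimately show ?thesis unfolding \<mu>_def by simp
    qed
    then have "L = sqrt (2 * \<alpha>)" using Llo Lhi2 by (simp add: mult.commute)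
    then have "L ^ N = sqrt (2^N) * sqrt (\<alpha>^N)" by (simp add: real_sqrt_power[symmetric] power_mult_distrib real_sqrt_mult)
    moreover have "D = sqrt (\<alpha>^N) * sqrt (real N + 1)" unfolding D_def u1 by (simp add: real_sqrt_mult)
    ultimately have "L ^ N / (2 ^ N * D) = sqrt (2^N) / (2^N * sqrt (real N + 1))"
      using apos by (simp add: field_simps)
    also have "\<dots> = sqrt (2^N) / (sqrt (2^N) * sqrt (2^N) * sqrt (real N + 1))" using s2 by simp
    also have "\<dots> = 1 / (sqrt (2^N) * sqrt (real N + 1))"
    proof -
      have q0: "sqrt ((2::real)^N) \<noteq> 0" by simp
      show ?thesis using q0 by (simp only: divide_divide_eq_left[symmetric] mult.assoc) simp
    qed
    finally show ?thesis unfolding p2 .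
  qed
  have eq1: "(real_of_int m / real_of_int r) ^ 2 = (real N * a - 1) / (real N - 1) \<Longrightarrow> u = 1"
  proof -
    assume "(real_of_int m / real_of_int r) ^ 2 = (real N * a - 1) / (real N - 1)"
    then have "u * c = c" unfolding rho na using N1 by simp
    then show "u = 1" using cpos by simp
  qed
  have eq2: "(real_of_int m / real_of_int r) ^ 2 = (real N * a - 1) * (real N + 1) / (real N - 1) \<Longrightarrow> u = real N + 1"
  proof -
    assume "(real_of_int m / real_of_int r) ^ 2 = (real N * a - 1) * (real N + 1) / (real N - 1)"
    then have "u * c = c * (real N + 1)" unfolding rho hiq by simp
    then show "u = real N + 1" using cpos by (simp add: mult.commute)
  qed
  show ?thesis unfolding cd using part1 part2 part3 part4 eq1 eq2 unfolding N_def by blast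
qed


end
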